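(* Suppose $J^d_\mu$ takes the same value for all $d\in\mathcal D$. Then a policy $d\in\mathcal D$, with quantities $(\mathbf P,\mathbf r,J_\mu,\mathbf g)$, satisfies $J^d_{\mu,\sigma}=\max_{d''\in\mathcal D}J^{d''}_{\mu,\sigma}$ if and only if for every $d'\in\mathcal D$ with $(\mathbf P',\mathbf r')$, $$\sum_{j\in\mathcal S}p'(i,j)g(j)+r'(i)-\beta(r'(i)-J_\mu)^2\ \le\ \sum_{j\in\mathcal S}p(i,j)g(j)+r(i)-\beta(r(i)-J_\mu)^2\qquad\text{for all } i\in\mathcal S.$$
   Context: Let $\mathcal S=\{1,\dots,S\}$ be a finite state space and $\mathcal A$ a finite action set. For $i,j\in\mathcal S$, $a\in\mathcal A$, let $p^a(i,j)\ge 0$ with $\sum_{j}p^a(i,j)=1$ be transition probabilities and $r(i,a)\in\mathbb R$ rewards. A deterministic stationary policy is a map $d:\mathcal S\to\mathcal A$; $\mathcal D$ denotes the set of such policies. Under $d$, $\mathbf P^d$ is the matrix with entries $p(i,j)=p^{d(i)}(i,j)$ and $\mathbf r^d$ the vector with entries $r(i)=r(i,d(i))$. Standing assumption: for every $d\in\mathcal D$ the chain with transition matrix $\mathbf P^d$ is irreducible, so it has a unique stationary distribution $\boldsymbol\pi^d$ (row vector, $\boldsymbol\pi^d\mathbf P^d=\boldsymbol\pi^d$, $\boldsymbol\pi^d\mathbf 1=1$) with all entries strictly positive. Define $J^d_\mu=\boldsymbol\pi^d\mathbf r^d$, $J^d_\sigma=\sum_i\pi^d(i)(r(i,d(i))-J^d_\mu)^2$,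 and for fixed $\beta>0$, $J^d_{\mu,\sigma}=J^d_\mu-\beta J^d_\sigma=\boldsymbol\pi^d\mathbf f^d$ with $f^d(i)=r(i,d(i))-\beta(r(i,d(i))-J^d_\mu)^2$. The performance potential $\mathbf g^d$ is any solution of $\mathbf g^d=\mathbf f^d-J^d_{\mu,\sigma}\mathbf 1+\mathbf P^d\mathbf g^d$ (unique up to an additive constant vector). *)

theory Defs
  imports Main "HOL.Real"
begin

text \<open>MDP with finite state type 's and finite action type 'a.
  p a i j = transition probability from i to j under action a; r i a = reward.
  Deterministic stationary policies are the functions d :: 's \<Rightarrow> 'a.\<close>

definition stochastic :: "('a \<Rightarrow> 's::finite \<Rightarrow> 's \<Rightarrow> real) \<Rightarrow> bool" where
  "stochastic p \<longleftrightarrow> (\<forall>a i j. p a i j \<ge> 0) \<and> (\<forall>a i. (\<Sum>j\<in>UNIV. p a i j) = 1)"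

definition irreducible_policy :: "('a \<Rightarrow> 's \<Rightarrow> 's \<Rightarrow> real) \<Rightarrow> ('s \<Rightarrow> 'a) \<Rightarrow> bool" where
  "irreducible_policy p d \<longleftrightarrow> (\<forall>i j. (i, j) \<in> {(x, y). p (d x) x y > 0}\<^sup>*)"

definition is_stat_dist :: "('a \<Rightarrow> 's::finite \<Rightarrow> 's \<Rightarrow> real) \<Rightarrow> ('s \<Rightarrow> 'a) \<Rightarrow> ('s \<Rightarrow> real) \<Rightarrow> bool" where
  "is_stat_dist p d \<pi> \<longleftrightarrow> (\<forall>j. (\<Sum>i\<in>UNIV. \<pi> i * p (d i) i j) = \<pi> j) \<and> (\<Sum>i\<in>UNIV. \<pi> i) = 1"

text \<open>The (unique, under irreducibility) stationary distribution \<pi>^d.\<close>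
definition stat_dist :: "('a \<Rightarrow> 's::finite \<Rightarrow> 's \<Rightarrow> real) \<Rightarrow> ('s \<Rightarrow> 'a) \<Rightarrow> 's \<Rightarrow> real" where
  "stat_dist p d = (THE \<pi>. is_stat_dist p d \<pi>)"

definition J_mu :: "('a \<Rightarrow> 's::finite \<Rightarrow> 's \<Rightarrow> real) \<Rightarrow> ('s \<Rightarrow> 'a \<Rightarrow> real) \<Rightarrow> ('s \<Rightarrow> 'a) \<Rightarrow> real" where
  "J_mu p r d = (\<Sum>i\<in>UNIV. stat_dist p d i * r i (d i))"

definition f_ms :: "('a \<Rightarrow> 's::finite \<Rightarrow> 's \<Rightarrow> real) \<Rightarrow> ('s \<Rightarrow> 'a \<Rightarrow> real) \<Rightarrow> real \<Rightarrow> ('s \<Rightarrow> 'a) \<Rightarrow> 's \<Rightarrow> real" where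
  "f_ms p r \<beta> d i = r i (d i) - \<beta> * (r i (d i) - J_mu p r d)\<^sup>2"

definition J_ms :: "('a \<Rightarrow> 's::finite \<Rightarrow> 's \<Rightarrow> real) \<Rightarrow> ('s \<Rightarrow> 'a \<Rightarrow> real) \<Rightarrow> real \<Rightarrow> ('s \<Rightarrow> 'a) \<Rightarrow> real" where
  "J_ms p r \<beta> d = (\<Sum>i\<in>UNIV. stat_dist p d i * f_ms p r \<beta> d i)"

definition is_potential :: "('a \<Rightarrow> 's::finite \<Rightarrow> 's \<Rightarrow> real) \<Rightarrow> ('s \<Rightarrow> 'a \<Rightarrow> real) \<Rightarrow> real \<Rightarrow> ('s \<Rightarrow> 'a) \<Rightarrow> ('s \<Rightarrow> real) \<Rightarrow> bool" where
  "is_potential p r \<beta> d g \<longleftrightarrow>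
     (\<forall>i. g i = f_ms p r \<beta> d i - J_ms p r \<beta> d + (\<Sum>j\<in>UNIV. p (d i) i j * g j))"

end

theory Submission imports Defs "HOL-Analysis.Analysis" begin

lemma exists_stat:
  fixes P :: "'s::finite \<Rightarrow> 's \<Rightarrow> real"
  assumes nn: "\<And>i j. P i j \<ge> 0" and rs: "\<And>i. (\<Sum>j\<in>UNIV. P i j) = 1"
  shows "\<exists>\<pi>. (\<forall>i. \<pi> i \<ge> 0) \<and> (\<forall>j. (\<Sum>i\<in>UNIV. \<pi> i * P i j) = \<pi> j) \<and> (\<Sum>i\<in>UNIV. \<pi> i) = 1"
proof -
  define S where "S = {x::real^'s. (\<forall>i. 0 \<le> x$i) \<and> (\<Sum>i\<in>UNIV. x$i) = 1}"
  define f where "f = (\<lambda>x::real^'s. \<chi> j. \<Sum>i\<in>UNIV. x$i * P i j)"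
  have cl: "closed S"
  proof -
    have "S = {x::real^'s. \<forall>i. 0 \<le> x$i} \<inter> {x. (\<Sum>i\<in>UNIV. x$i) = 1}"
      unfolding S_def by auto
    moreover have "closed {x::real^'s. (\<Sum>i\<in>UNIV. x$i) = 1}"
      by (intro closed_Collect_eq continuous_intros)
    ultimately show ?thesis using closed_positive_orthant closed_Int by metis
  qed
  have "S \<subseteq> cbox 0 1"
  proof
    fix x assume x: "x \<in> S"
    have "x$i \<le> 1" for i
    proof -
      have "x$i \<le> (\<Sum>k\<in>UNIV. x$k)"
        using x unfolding S_def by (intro member_le_sum) auto
      thus ?thesis using x unfolding S_def by simp
    qed
    thus "x \<in> cbox 0 1" using x unfolding S_def by (auto simp: mem_box_cart)
  qed
  hence bd: "bounded S" by (meson bounded_cbox bounded_subset)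
  have cp: "compact S" using cl bd compact_eq_bounded_closed by blast
  have cv: "convex S"
  proof (rule convexI)
    fix x y :: "real^'s" and u v :: real
    assume x: "x \<in> S" and y: "y \<in> S" and u: "0 \<le> u" and v: "0 \<le> v" and uv: "u + v = 1"
    have "(\<Sum>i\<in>UNIV. (u *\<^sub>R x + v *\<^sub>R y)$i) = u * (\<Sum>i\<in>UNIV. x$i) + v * (\<Sum>i\<in>UNIV. y$i)"
      by (simp add: sum.distrib sum_distrib_left)
    also have "\<dots> = 1" using x y u v uv unfolding S_def by simp
    finally show "u *\<^sub>R x + v *\<^sub>R y \<in> S" using x y u v uv unfolding S_def by simp
  qed
  have ne: "S \<noteq> {}"
  proof -
    have "(\<chi> i. 1 / real CARD('s)) \<in> S" unfolding S_def by auto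
    thus ?thesis by blast
  qed
  have ct: "continuous_on S f" unfolding f_def by (intro continuous_intros)
  have fim: "f \<in> S \<rightarrow> S"
  proof
    fix x assume x: "x \<in> S"
    have "(\<Sum>j\<in>UNIV. \<Sum>i\<in>UNIV. x$i * P i j) = (\<Sum>i\<in>UNIV. \<Sum>j\<in>UNIV. x$i * P i j)"
      by (rule sum.swap)
    also have "\<dots> = (\<Sum>i\<in>UNIV. x$i * (\<Sum>j\<in>UNIV. P i j))"
      by (simp add: sum_distrib_left)
    also have "\<dots> = 1" using x rs unfolding S_def by simp
    finally show "f x \<in> S" using x nn unfolding S_def f_def
      by (auto intro!: sum_nonneg)
  qed
  obtain x where "x \<in> S" "f x = x" using brouwer[OF cp cv ne ct fim] by blast
  hence "(\<forall>i. x$i \<ge> 0) \<and> (\<forall>j. (\<Sum>i\<in>UNIV. x$i * P i j) = x$j) \<and> (\<Sum>i\<in>UNIV. x$i) = 1"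
    unfolding S_def f_def by (auto simp: vec_eq_iff)
  thus ?thesis by blast
qed

lemma zero_prop:
  fixes w :: "'s::finite \<Rightarrow> real"
  assumes nn: "\<And>i j. P i j \<ge> 0"
    and irr: "\<And>i j. (i, j) \<in> {(x, y). P x y > 0}\<^sup>*"
    and st: "\<And>j. (\<Sum>i\<in>UNIV. w i * P i j) = w j"
    and wn: "\<And>i. w i \<ge> 0" and wk: "w k = 0"
  shows "w i = 0"
  using irr[of i k]
proof (induction rule: converse_rtrancl_induct)
  case base then show ?case using wk .
next
  case (step a y)
  have "(\<Sum>x\<in>UNIV. w x * P x y) = 0" using st[of y] step by simp
  hence "\<forall>x\<in>UNIV. w x * P x y = 0"
    by (subst sum_nonneg_eq_0_iff[symmetric]) (auto intro: mult_nonneg_nonneg wn nn)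
  hence "w a * P a y = 0" by simp
  with step(1) show ?case by auto
qed

lemma stat_props:
  fixes p :: "'a \<Rightarrow> 's::finite \<Rightarrow> 's \<Rightarrow> real"
  assumes stoch: "stochastic p" and irr: "irreducible_policy p e"
  shows "is_stat_dist p e (stat_dist p e) \<and> (\<forall>i. stat_dist p e i > 0)"
proof -
  define P where "P = (\<lambda>i j. p (e i) i j)"
  have nn: "\<And>i j. P i j \<ge> 0" and rs: "\<And>i. (\<Sum>j\<in>UNIV. P i j) = 1"
    using stoch unfolding stochastic_def P_def by auto
  have ir: "\<And>i j. (i, j) \<in> {(x, y). P x y > 0}\<^sup>*"
    using irr unfolding irreducible_policy_def P_def by auto
  obtain \<pi> where H: "(\<forall>i. \<pi> i \<ge> 0) \<and> (\<forall>j. (\<Sum>i\<in>UNIV. \<pi> i * P i j) = \<pi> j) \<and> (\<Sum>i\<in>UNIV. \<pi> i) = 1"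
    using exists_stat[OF nn rs] by (rule exE)
  note pn = conjunct1[OF H]
  note ps = conjunct1[OF conjunct2[OF H]]
  note p1 = conjunct2[OF conjunct2[OF H]]
  have ppos: "\<pi> i > 0" for i
  proof (rule ccontr)
    assume "\<not> \<pi> i > 0"
    hence "\<pi> i = 0" using spec[OF pn, of i] by linarith
    hence "\<pi> k = 0" for k by (rule zero_prop[OF nn ir ps[rule_format] pn[rule_format]])
    thus False using p1 by simp
  qed
  have uniq: "v = \<pi>" if "is_stat_dist p e v" for v
  proof -
    have vs: "\<forall>j. (\<Sum>i\<in>UNIV. v i * P i j) = v j" and v1: "(\<Sum>i\<in>UNIV. v i) = 1"
      using that unfolding is_stat_dist_def P_def by auto
    define c where "c = Min ((\<lambda>i. v i / \<pi> i) ` UNIV)"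
    have "c \<in> (\<lambda>i. v i / \<pi> i) ` UNIV" unfolding c_def by (rule Min_in) auto
    then obtain k where kc: "c = v k / \<pi> k" by blast
    have cle: "c \<le> v i / \<pi> i" for i unfolding c_def by (rule Min_le) auto
    define w where "w = (\<lambda>i. v i - c * \<pi> i)"
    have wn: "w i \<ge> 0" for i
      using cle[of i] ppos[of i] unfolding w_def by (simp add: field_simps)
    have wk: "w k = 0" using kc ppos[of k] unfolding w_def by simp
    have ws: "(\<Sum>i\<in>UNIV. w i * P i j) = w j" for j
    proof -
      have "(\<Sum>i\<in>UNIV. w i * P i j) = (\<Sum>i\<in>UNIV. v i * P i j) - c * (\<Sum>i\<in>UNIV. \<pi> i * P i j)"
        unfolding w_def by (simp add: left_diff_distrib sum_subtractf sum_distrib_left mult.assoc)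
      also have "\<dots> = v j - c * \<pi> j" by (simp only: vs[rule_format, of j] ps[rule_format, of j])
      finally show ?thesis unfolding w_def .
    qed
    have w0: "w i = 0" for i using zero_prop[OF nn ir ws wn wk] .
    hence "v = (\<lambda>i. c * \<pi> i)" unfolding w_def by auto
    moreover have "c = 1" using v1 p1 calculation by (simp add: sum_distrib_left[symmetric])
    ultimately show ?thesis by auto
  qed
  have isd: "is_stat_dist p e \<pi>" using ps p1 unfolding is_stat_dist_def P_def by auto
  have "stat_dist p e = \<pi>" unfolding stat_dist_def
    by (rule the_equality[where P="is_stat_dist p e", OF isd uniq])
  thus ?thesis using isd ppos by simp
qed

theorem mainTheorem4:
  fixes p :: "'a::finite \<Rightarrow> 's::finite \<Rightarrow> 's \<Rightarrow> real"
    and r :: "'s \<Rightarrow> 'a \<Rightarrow> real"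
    and \<beta> :: real
    and d :: "'s \<Rightarrow> 'a"
    and g :: "'s \<Rightarrow> real"
  assumes stoch: "stochastic p"
    and irred: "\<And>d'. irreducible_policy p d'"
    and beta_pos: "\<beta> > 0"
    and same_mu: "\<And>d1 d2. J_mu p r d1 = J_mu p r d2"
    and pot: "is_potential p r \<beta> d g"
  shows "J_ms p r \<beta> d = Max (range (J_ms p r \<beta>)) \<longleftrightarrow>
    (\<forall>d'. \<forall>i.
       (\<Sum>j\<in>UNIV. p (d' i) i j * g j) + r i (d' i) - \<beta> * (r i (d' i) - J_mu p r d)\<^sup>2
       \<le> (\<Sum>j\<in>UNIV. p (d i) i j * g j) + r i (d i) - \<beta> * (r i (d i) - J_mu p r d)\<^sup>2)"
proof -
  define \<mu> where "\<mu> = J_mu p r d"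
  define A where "A = (\<lambda>e i. (\<Sum>j\<in>UNIV. p (e i) i j * g j) + r i (e i) - \<beta> * (r i (e i) - \<mu>)\<^sup>2)"
  have Ad: "A d i = g i + J_ms p r \<beta> d" for i
  proof -
    have "g i = f_ms p r \<beta> d i - J_ms p r \<beta> d + (\<Sum>j\<in>UNIV. p (d i) i j * g j)"
      using pot unfolding is_potential_def by blast
    thus ?thesis unfolding A_def f_ms_def \<mu>_def by linarith
  qed
  have Ae: "A e i = (\<Sum>j\<in>UNIV. p (e i) i j * g j) + f_ms p r \<beta> e i" for e i
    unfolding A_def f_ms_def \<mu>_def using same_mu[of e d] by simp
  have diff: "J_ms p r \<beta> e - J_ms p r \<beta> d = (\<Sum>i\<in>UNIV. stat_dist p e i * (A e i - A d i))" for e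
  proof -
    define q where "q = stat_dist p e"
    have isd: "is_stat_dist p e q" using stat_props[OF stoch irred] unfolding q_def by blast
    hence qs: "\<And>j. (\<Sum>i\<in>UNIV. q i * p (e i) i j) = q j" and q1: "(\<Sum>i\<in>UNIV. q i) = 1"
      unfolding is_stat_dist_def by auto
    have "(\<Sum>i\<in>UNIV. q i * (\<Sum>j\<in>UNIV. p (e i) i j * g j)) = (\<Sum>j\<in>UNIV. (\<Sum>i\<in>UNIV. q i * p (e i) i j) * g j)"
    proof -
      have "(\<Sum>i\<in>UNIV. q i * (\<Sum>j\<in>UNIV. p (e i) i j * g j)) = (\<Sum>i\<in>UNIV. \<Sum>j\<in>UNIV. q i * p (e i) i j * g j)"
        by (simp add: sum_distrib_left mult.assoc)
      also have "\<dots> = (\<Sum>j\<in>UNIV. \<Sum>i\<in>UNIV. q i * p (e i) i j * g j)"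
        by (rule sum.swap)
      also have "\<dots> = (\<Sum>j\<in>UNIV. (\<Sum>i\<in>UNIV. q i * p (e i) i j) * g j)"
        by (simp add: sum_distrib_right)
      finally show ?thesis .
    qed
    also have "\<dots> = (\<Sum>j\<in>UNIV. q j * g j)" using qs by simp
    finally have s1: "(\<Sum>i\<in>UNIV. q i * (\<Sum>j\<in>UNIV. p (e i) i j * g j)) = (\<Sum>j\<in>UNIV. q j * g j)" .
    have "(\<Sum>i\<in>UNIV. q i * (A e i - A d i))
        = (\<Sum>i\<in>UNIV. q i * (\<Sum>j\<in>UNIV. p (e i) i j * g j)) + (\<Sum>i\<in>UNIV. q i * f_ms p r \<beta> e i)
          - (\<Sum>i\<in>UNIV. q i * g i) - (\<Sum>i\<in>UNIV. q i) * J_ms p r \<beta> d"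
      unfolding Ae[of e] Ad by (simp add: right_diff_distrib distrib_left sum.distrib sum_subtractf sum_distrib_right)
    also have "\<dots> = J_ms p r \<beta> e - J_ms p r \<beta> d"
      using s1 q1 unfolding J_ms_def q_def by simp
    finally show ?thesis unfolding q_def by simp
  qed
  have fin: "finite (range (J_ms p r \<beta>))" by simp
  have goal: "(\<forall>d' i. A d' i \<le> A d i) \<longleftrightarrow> J_ms p r \<beta> d = Max (range (J_ms p r \<beta>))"
  proof
    assume H: "\<forall>d' i. A d' i \<le> A d i"
    have "J_ms p r \<beta> e \<le> J_ms p r \<beta> d" for e
    proof -
      have "(\<Sum>i\<in>UNIV. stat_dist p e i * (A e i - A d i)) \<le> 0"
        using H stat_props[OF stoch irred, of e]
        by (intro sum_nonpos mult_nonneg_nonpos) (auto simp: less_imp_le)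
      thus ?thesis using diff[of e] by simp
    qed
    thus "J_ms p r \<beta> d = Max (range (J_ms p r \<beta>))"
      by (intro Max_eqI[symmetric] fin) auto
  next
    assume M: "J_ms p r \<beta> d = Max (range (J_ms p r \<beta>))"
    show "\<forall>d' i. A d' i \<le> A d i"
    proof (rule ccontr)
      assume "\<not> (\<forall>d' i. A d' i \<le> A d i)"
      then obtain d' k where k: "A d' k > A d k" by (meson not_le)
      define e where "e = d(k := d' k)"
      have Aek: "A e k = A d' k" unfolding A_def e_def by simp
      have Aex: "x \<noteq> k \<Longrightarrow> A e x = A d x" for x unfolding A_def e_def by simp
      have "(\<Sum>i\<in>UNIV. stat_dist p e i * (A e i - A d i)) = stat_dist p e k * (A e k - A d k)"
        by (subst sum.mono_neutral_right[of UNIV "{k}"]) (auto simp: Aex)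
      also have "\<dots> > 0" using stat_props[OF stoch irred, of e] k Aek by simp
      finally have "J_ms p r \<beta> e > J_ms p r \<beta> d" using diff[of e] by simp
      moreover have "J_ms p r \<beta> e \<le> Max (range (J_ms p r \<beta>))" by (rule Max_ge) (auto simp: fin)
      ultimately show False using M by linarith
    qed
  qed
  show ?thesis using goal unfolding A_def \<mu>_def by blast
qed

end
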